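(* Let $G=(V,E)$ be a finite tree, fix a vertex $i\in V$, and let $\phi:V\to\mathbb{R}_{\ge 0}$ be defined as below. Then for every starting vertex $j\in V$, the path $x_0=j,x_1,x_2,\dots$ produced by the descent rule (at each step $x_{k+1}$ is a neighbor of $x_k$ at which $\phi$ is minimal among all neighbors of $x_k$, continuing until $x_k=i$) is the shortest path from $j$ to $i$ in $G$, i.e. it has length equal to the graph distance $d(j,i)$, regardless of how ties are broken.
   Context: $L=D-A$ is the Laplacian matrix of $G$ ($D$ diagonal with $D_{vv}=\deg_G(v)$, $A$ the adjacency matrix). Let $C_1,\dots,C_m$ be the connected components of $G-i$ (the graph with $i$ and its incident edges deleted), and let $L_{C_k}$ denote the principal submatrix of $L$ indexed by the vertices of $C_k$ (with degrees taken in $G$). The function $\phi$ is defined by $\phi(i)=0$ and, on each $C_k$, $\phi$ equals a strictly positive eigenvector of $L_{C_k}$ associated with its smallest eigenvalue (this eigenvalue is positive and simple, and such a positive eigenvector exists and is unique up to positive scaling). *)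

theory Defs
  imports Complex_Main
begin

definition simple_graph :: "'a set \<Rightarrow> ('a \<Rightarrow> 'a \<Rightarrow> bool) \<Rightarrow> bool" where
  "simple_graph V E \<longleftrightarrow> finite V \<and> (\<forall>u v. E u v \<longrightarrow> u \<in> V \<and> v \<in> V)
     \<and> (\<forall>u v. E u v \<longrightarrow> E v u) \<and> (\<forall>u. \<not> E u u)"

definition edges :: "('a \<Rightarrow> 'a \<Rightarrow> bool) \<Rightarrow> 'a set set" where
  "edges E = {{u, v} | u v. E u v}"

definition connected_graph :: "'a set \<Rightarrow> ('a \<Rightarrow> 'a \<Rightarrow> bool) \<Rightarrow> bool" where
  "connected_graph V E \<longleftrightarrow> (\<forall>u\<in>V. \<forall>v\<in>V. E\<^sup>*\<^sup>* u v)"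

definition is_tree :: "'a set \<Rightarrow> ('a \<Rightarrow> 'a \<Rightarrow> bool) \<Rightarrow> bool" where
  "is_tree V E \<longleftrightarrow> simple_graph V E \<and> V \<noteq> {} \<and> connected_graph V E
     \<and> card (edges E) = card V - 1"

definition deg :: "('a \<Rightarrow> 'a \<Rightarrow> bool) \<Rightarrow> 'a \<Rightarrow> nat" where
  "deg E u = card {w. E u w}"

definition graph_dist :: "('a \<Rightarrow> 'a \<Rightarrow> bool) \<Rightarrow> 'a \<Rightarrow> 'a \<Rightarrow> nat" where
  "graph_dist E u v = (LEAST n. \<exists>p :: nat \<Rightarrow> 'a. p 0 = u \<and> p n = v \<and> (\<forall>k<n. E (p k) (p (Suc k))))"

definition del_vertex :: "('a \<Rightarrow> 'a \<Rightarrow> bool) \<Rightarrow> 'a \<Rightarrow> 'a \<Rightarrow> 'a \<Rightarrow> bool" where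
  "del_vertex E i u v \<longleftrightarrow> E u v \<and> u \<noteq> i \<and> v \<noteq> i"

definition components_minus :: "'a set \<Rightarrow> ('a \<Rightarrow> 'a \<Rightarrow> bool) \<Rightarrow> 'a \<Rightarrow> 'a set set" where
  "components_minus V E i = {{w \<in> V - {i}. (del_vertex E i)\<^sup>*\<^sup>* u w} | u. u \<in> V - {i}}"

text \<open>Action of the principal submatrix L_C of the Laplacian L = D - A of G
  (degrees taken in G) on a vector indexed by C.\<close>
definition lap_sub :: "('a \<Rightarrow> 'a \<Rightarrow> bool) \<Rightarrow> 'a set \<Rightarrow> ('a \<Rightarrow> real) \<Rightarrow> 'a \<Rightarrow> real" where
  "lap_sub E C x u = real (deg E u) * x u - (\<Sum>w\<in>{w\<in>C. E u w}. x w)"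

definition is_eigenpair_sub :: "('a \<Rightarrow> 'a \<Rightarrow> bool) \<Rightarrow> 'a set \<Rightarrow> real \<Rightarrow> ('a \<Rightarrow> real) \<Rightarrow> bool" where
  "is_eigenpair_sub E C \<mu> x \<longleftrightarrow> (\<exists>u\<in>C. x u \<noteq> 0) \<and> (\<forall>u\<in>C. lap_sub E C x u = \<mu> * x u)"

definition is_phi :: "'a set \<Rightarrow> ('a \<Rightarrow> 'a \<Rightarrow> bool) \<Rightarrow> 'a \<Rightarrow> ('a \<Rightarrow> real) \<Rightarrow> bool" where
  "is_phi V E i \<phi> \<longleftrightarrow> \<phi> i = 0 \<and>
     (\<forall>C\<in>components_minus V E i. (\<forall>u\<in>C. \<phi> u > 0) \<and>
        (\<exists>lam. is_eigenpair_sub E C lam \<phi> \<and> (\<forall>\<mu> x. is_eigenpair_sub E C \<mu> x \<longrightarrow> lam \<le> \<mu>)))"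

definition descent_run :: "('a \<Rightarrow> 'a \<Rightarrow> bool) \<Rightarrow> 'a \<Rightarrow> ('a \<Rightarrow> real) \<Rightarrow> 'a \<Rightarrow> (nat \<Rightarrow> 'a) \<Rightarrow> bool" where
  "descent_run E i \<phi> j x \<longleftrightarrow> x 0 = j \<and>
     (\<forall>k. x k \<noteq> i \<longrightarrow> E (x k) (x (Suc k)) \<and> (\<forall>w. E (x k) w \<longrightarrow> \<phi> (x (Suc k)) \<le> \<phi> w))"

end

theory Submission
  imports Defs
begin

lemma walk_from_rtranclp:
  assumes "R\<^sup>*\<^sup>* u v"
  shows "\<exists>n p. p 0 = u \<and> p n = v \<and> (\<forall>k<n. R (p k) (p (Suc k)))"
  using assms
proof (induction rule: rtranclp_induct)
  case base
  show ?case by (rule exI[of _ 0], rule exI[of _ "\<lambda>_. u"]) simp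
next
  case (step y z)
  then obtain n p where p: "p 0 = u" "p n = y" "\<forall>k<n. R (p k) (p (Suc k))" by blast
  define q where "q = (\<lambda>k. if k \<le> n then p k else z)"
  have "q 0 = u" "q (Suc n) = z" using p by (auto simp: q_def)
  moreover have "\<forall>k<Suc n. R (q k) (q (Suc k))"
  proof (intro allI impI)
    fix k assume "k < Suc n"
    then show "R (q k) (q (Suc k))"
      using p step(2) by (cases "k < n") (auto simp: q_def less_Suc_eq)
  qed
  ultimately show ?case by blast
qed

locale setting =
  fixes V :: "'a set" and E :: "'a \<Rightarrow> 'a \<Rightarrow> bool" and i :: 'a and \<phi> :: "'a \<Rightarrow> real"
  assumes tree: "is_tree V E" and iV: "i \<in> V" and phi: "is_phi V E i \<phi>"
begin

lemma finV: "finite V" using tree by (simp add: is_tree_def simple_graph_def)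
lemma inV: "E u v \<Longrightarrow> u \<in> V \<and> v \<in> V" using tree by (simp add: is_tree_def simple_graph_def)
lemma symE: "E u v \<Longrightarrow> E v u" using tree by (simp add: is_tree_def simple_graph_def)
lemma irrE: "\<not> E u u" using tree by (simp add: is_tree_def simple_graph_def)
lemma conn: "u \<in> V \<Longrightarrow> v \<in> V \<Longrightarrow> E\<^sup>*\<^sup>* u v" using tree by (simp add: is_tree_def connected_graph_def)
lemma cardE: "card (edges E) = card V - 1" using tree by (simp add: is_tree_def)

definition W where "W n v \<longleftrightarrow> (\<exists>p. p 0 = v \<and> p n = i \<and> (\<forall>k<n. E (p k) (p (Suc k))))"
definition d where "d v = graph_dist E v i"

lemma d_eq: "d v = (LEAST n. W n v)" by (simp add: d_def graph_dist_def W_def)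

lemma W_ex: "v \<in> V \<Longrightarrow> \<exists>n. W n v"
  using walk_from_rtranclp[OF conn[OF _ iV]] by (auto simp: W_def)

lemma W_d: "v \<in> V \<Longrightarrow> W (d v) v"
  unfolding d_eq using W_ex by (metis LeastI_ex)

lemma d_le: "W n v \<Longrightarrow> d v \<le> n"
  unfolding d_eq by (rule Least_le)

lemma d_i: "d i = 0"
proof -
  have "W 0 i" unfolding W_def by (rule exI[of _ "\<lambda>_. i"]) simp
  then show ?thesis using d_le by fastforce
qed

lemma d_0: "v \<in> V \<Longrightarrow> d v = 0 \<Longrightarrow> v = i"
  using W_d[of v] by (auto simp: W_def)

lemma d_edge: assumes "E u w" shows "d u \<le> d w + 1"
proof -
  have "w \<in> V" using inV assms by blast
  from W_d[OF this] obtain p where p: "p 0 = w" "p (d w) = i" "\<forall>k<d w. E (p k) (p (Suc k))"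
    by (auto simp: W_def)
  define q where "q = (\<lambda>k. if k = 0 then u else p (k - 1))"
  have "W (d w + 1) u" unfolding W_def
  proof (rule exI[of _ q], intro conjI allI impI)
    show "q 0 = u" by (simp add: q_def)
    show "q (d w + 1) = i" using p by (simp add: q_def)
    fix k assume "k < d w + 1"
    then show "E (q k) (q (Suc k))" using p assms
      by (cases k) (auto simp: q_def)
  qed
  then show ?thesis by (rule d_le)
qed

lemma d_par_ex: assumes "v \<in> V" "v \<noteq> i" shows "\<exists>p. E v p \<and> d p + 1 = d v"
proof -
  from W_d[OF assms(1)] obtain p where p: "p 0 = v" "p (d v) = i" "\<forall>k<d v. E (p k) (p (Suc k))"
    by (auto simp: W_def)
  have pos: "d v > 0" using assms d_0 by blast
  have e: "E v (p 1)" using p pos by (metis One_nat_def)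
  have "W (d v - 1) (p 1)" unfolding W_def
    by (rule exI[of _ "\<lambda>k. p (Suc k)"]) (use p pos in auto)
  then have "d (p 1) \<le> d v - 1" by (rule d_le)
  moreover have "d v \<le> d (p 1) + 1" using d_edge[OF e] .
  ultimately show ?thesis using e pos by (intro exI[of _ "p 1"]) auto
qed

definition par where "par v = (SOME p. E v p \<and> d p + 1 = d v)"

lemma par: "v \<in> V \<Longrightarrow> v \<noteq> i \<Longrightarrow> E v (par v) \<and> d (par v) + 1 = d v"
  unfolding par_def using d_par_ex by (rule someI_ex)

lemma fin_edges: "finite (edges E)"
proof -
  have "edges E \<subseteq> (\<lambda>(u,v). {u,v}) ` (V \<times> V)"
    unfolding edges_def using inV by auto
  then show ?thesis using finV finite_subset by blast
qed

lemma all_par_edges: "edges E = (\<lambda>v. {v, par v}) ` (V - {i})"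
proof -
  have sub: "(\<lambda>v. {v, par v}) ` (V - {i}) \<subseteq> edges E"
    unfolding edges_def using par by blast
  have inj: "inj_on (\<lambda>v. {v, par v}) (V - {i})"
  proof (rule inj_onI)
    fix a b assume a: "a \<in> V - {i}" and b: "b \<in> V - {i}" and eq: "{a, par a} = {b, par b}"
    show "a = b"
    proof (rule ccontr)
      assume "a \<noteq> b"
      then have "a = par b" "b = par a" using eq by (auto simp: doubleton_eq_iff)
      then show False using par[of a] par[of b] a b by auto
    qed
  qed
  have "card ((\<lambda>v. {v, par v}) ` (V - {i})) = card (V - {i})" using card_image[OF inj] .
  also have "\<dots> = card (edges E)" using cardE iV finV by simp
  finally show ?thesis using card_subset_eq[OF fin_edges sub] by simp
qed

lemma tree_struct:
  assumes "u \<in> V" "u \<noteq> i" "E u w" "w \<noteq> par u"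
  shows "d w = d u + 1"
proof -
  have "{u, w} \<in> edges E" unfolding edges_def using assms by blast
  then obtain v where v: "v \<in> V - {i}" "{u, w} = {v, par v}" using all_par_edges by auto
  show ?thesis
  proof (cases "u = v")
    case True then show ?thesis using v assms by (auto simp: doubleton_eq_iff)
  next
    case False
    then have "u = par v" "w = v" using v by (auto simp: doubleton_eq_iff)
    then show ?thesis using par[of v] v by auto
  qed
qed


lemma sum_lap:
  assumes CV: "C \<subseteq> V - {i}" and cl: "\<And>v w. v \<in> C \<Longrightarrow> E v w \<Longrightarrow> w \<noteq> i \<Longrightarrow> w \<in> C"
  shows "(\<Sum>v\<in>C. lap_sub E C f v) = (\<Sum>v\<in>{v\<in>C. E v i}. f v)"
proof -
  have finC: "finite C" using CV finV finite_subset by blast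
  have deg: "real (deg E v) = real (card {w\<in>C. E v w}) + (if E v i then 1 else 0)" if "v \<in> C" for v
  proof -
    have eq: "{w. E v w} = {w\<in>C. E v w} \<union> {w. w = i \<and> E v w}" using cl that by blast
    have f1: "finite {w\<in>C. E v w}" using finC by simp
    have f2: "finite {w. w = i \<and> E v w}" by simp
    have dj: "{w\<in>C. E v w} \<inter> {w. w = i \<and> E v w} = {}" using CV by blast
    have "{w. w = i \<and> E v w} = (if E v i then {i} else {})" by auto
    then have c2: "card {w. w = i \<and> E v w} = (if E v i then 1 else 0)" by simp
    show ?thesis unfolding deg_def eq card_Un_disjoint[OF f1 f2 dj] c2 by simp
  qed
  have inner: "(\<Sum>w\<in>{w\<in>C. E v w}. f w) = (\<Sum>w\<in>C. if E v w then f w else 0)" for v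
    using finC by (rule sum.inter_filter)
  have swp: "(\<Sum>v\<in>C. \<Sum>w\<in>C. if E v w then f w else 0) = (\<Sum>w\<in>C. \<Sum>v\<in>C. if E v w then f w else 0)"
    by (rule sum.swap)
  have col: "(\<Sum>v\<in>C. if E v w then f w else 0) = real (card {v\<in>C. E w v}) * f w" for w
  proof -
    have "(\<Sum>v\<in>C. if E v w then f w else 0) = (\<Sum>v\<in>C. if E w v then f w else 0)"
      using symE by (intro sum.cong) auto
    also have "\<dots> = (\<Sum>v\<in>{v\<in>C. E w v}. f w)" by (rule sum.inter_filter[OF finC, symmetric])
    also have "\<dots> = real (card {v\<in>C. E w v}) * f w" by (rule sum_constant)
    finally show ?thesis .
  qed
  have s1: "(\<Sum>v\<in>C. lap_sub E C f v) = (\<Sum>v\<in>C. real (deg E v) * f v) - (\<Sum>v\<in>C. \<Sum>w\<in>{w\<in>C. E v w}. f w)"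
    unfolding lap_sub_def by (rule sum_subtractf)
  have s2: "(\<Sum>v\<in>C. \<Sum>w\<in>{w\<in>C. E v w}. f w) = (\<Sum>v\<in>C. real (card {w\<in>C. E v w}) * f v)"
  proof -
    have "(\<Sum>v\<in>C. \<Sum>w\<in>{w\<in>C. E v w}. f w) = (\<Sum>v\<in>C. \<Sum>w\<in>C. if E v w then f w else 0)"
      using inner by (rule sum.cong[OF refl])
    also have "\<dots> = (\<Sum>w\<in>C. \<Sum>v\<in>C. if E v w then f w else 0)" by (rule swp)
    also have "\<dots> = (\<Sum>w\<in>C. real (card {v\<in>C. E w v}) * f w)" using col by (rule sum.cong[OF refl])
    finally show ?thesis .
  qed
  have s3: "(\<Sum>v\<in>C. real (deg E v) * f v) = (\<Sum>v\<in>C. real (card {w\<in>C. E v w}) * f v + (if E v i then f v else 0))"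
  proof (rule sum.cong[OF refl])
    fix v assume "v \<in> C"
    then show "real (deg E v) * f v = real (card {w\<in>C. E v w}) * f v + (if E v i then f v else 0)"
      using deg[of v] by (simp add: distrib_right)
  qed
  have s4: "(\<Sum>v\<in>C. real (card {w\<in>C. E v w}) * f v + (if E v i then f v else 0)) =
     (\<Sum>v\<in>C. real (card {w\<in>C. E v w}) * f v) + (\<Sum>v\<in>C. if E v i then f v else 0)"
    by (rule sum.distrib)
  have s5: "(\<Sum>v\<in>C. if E v i then f v else 0) = (\<Sum>v\<in>{v\<in>C. E v i}. f v)"
    by (rule sum.inter_filter[OF finC, symmetric])
  show ?thesis using s1 s2 s3 s4 s5 by linarith
qed

definition comp where "comp u = {w \<in> V - {i}. (del_vertex E i)\<^sup>*\<^sup>* u w}"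

lemma comp_in: "u \<in> V - {i} \<Longrightarrow> comp u \<in> components_minus V E i"
  unfolding comp_def components_minus_def by blast

lemma comp_self: "u \<in> V - {i} \<Longrightarrow> u \<in> comp u"
  unfolding comp_def by simp

lemma comp_closed: "v \<in> comp u \<Longrightarrow> E v w \<Longrightarrow> w \<noteq> i \<Longrightarrow> w \<in> comp u"
proof -
  assume a: "v \<in> comp u" "E v w" "w \<noteq> i"
  have "del_vertex E i v w" using a unfolding comp_def del_vertex_def by auto
  then have "(del_vertex E i)\<^sup>*\<^sup>* u w" using a(1) unfolding comp_def
    by (auto intro: rtranclp.rtrancl_into_rtrancl)
  then show ?thesis using a inV unfolding comp_def by blast
qed

lemma reach_root: "v \<in> V - {i} \<Longrightarrow> \<exists>r. (del_vertex E i)\<^sup>*\<^sup>* v r \<and> r \<in> V - {i} \<and> E r i"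
proof (induction "d v" arbitrary: v rule: less_induct)
  case less
  have pv: "E v (par v)" "d (par v) + 1 = d v" using par less.prems by auto
  show ?case
  proof (cases "par v = i")
    case True then show ?thesis using pv less.prems by (intro exI[of _ v]) auto
  next
    case False
    have pV: "par v \<in> V - {i}" using pv inV False by blast
    have "d (par v) < d v" using pv by simp
    from less.hyps[OF this pV] obtain r where
      r: "(del_vertex E i)\<^sup>*\<^sup>* (par v) r" "r \<in> V - {i}" "E r i" by blast
    have "del_vertex E i v (par v)" using pv False less.prems by (simp add: del_vertex_def)
    then have "(del_vertex E i)\<^sup>*\<^sup>* v r" using r(1) by (rule converse_rtranclp_into_rtranclp)
    then show ?thesis using r by blast
  qed
qed

lemma phi_i: "\<phi> i = 0" using phi by (simp add: is_phi_def)

lemma phi_pos: "u \<in> V - {i} \<Longrightarrow> \<phi> u > 0"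
  using phi comp_in comp_self unfolding is_phi_def by blast

lemma local_eq: assumes u: "u \<in> V - {i}"
  shows "\<exists>lam>0. lam * \<phi> u = (\<Sum>w\<in>{w. E u w}. \<phi> u - \<phi> w)"
proof -
  let ?C = "comp u"
  obtain lam where eig: "is_eigenpair_sub E ?C lam \<phi>"
    using phi comp_in[OF u] unfolding is_phi_def by blast
  have CV: "?C \<subseteq> V - {i}" unfolding comp_def by blast
  have finC: "finite ?C" using CV finV finite_subset by blast
  have eqs: "\<And>v. v \<in> ?C \<Longrightarrow> lap_sub E ?C \<phi> v = lam * \<phi> v" using eig by (simp add: is_eigenpair_sub_def)
  have "(\<Sum>v\<in>?C. lap_sub E ?C \<phi> v) = (\<Sum>v\<in>{v\<in>?C. E v i}. \<phi> v)"
    by (rule sum_lap[OF CV comp_closed])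
  moreover have "(\<Sum>v\<in>?C. lap_sub E ?C \<phi> v) = lam * (\<Sum>v\<in>?C. \<phi> v)"
    using eqs by (simp add: sum_distrib_left)
  moreover have "(\<Sum>v\<in>{v\<in>?C. E v i}. \<phi> v) > 0"
  proof -
    obtain r where r: "(del_vertex E i)\<^sup>*\<^sup>* u r" "r \<in> V - {i}" "E r i" using reach_root[OF u] by blast
    have rC: "r \<in> ?C" using r unfolding comp_def by blast
    have pos: "\<And>v. v \<in> {v\<in>?C. E v i} \<Longrightarrow> \<phi> v > 0" using CV phi_pos by blast
    show ?thesis
      by (rule sum_pos2[of _ r]) (use finC rC r pos in \<open>auto intro: less_imp_le\<close>)
  qed
  moreover have "(\<Sum>v\<in>?C. \<phi> v) > 0"
    using CV phi_pos finC comp_self[OF u] by (intro sum_pos2[of _ u]) (auto intro: less_imp_le)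
  ultimately have lampos: "lam > 0" by (metis zero_less_mult_pos2 mult.commute)
  have nb: "{w\<in>?C. E u w} = {w. E u w} - {i}"
    using comp_closed comp_self[OF u] CV by blast
  have finN: "finite {w. E u w}" using finV inV by (metis (no_types) finite_subset mem_Collect_eq subsetI)
  have "(\<Sum>w\<in>{w\<in>?C. E u w}. \<phi> w) = (\<Sum>w\<in>{w. E u w}. \<phi> w)"
    unfolding nb using finN phi_i by (intro sum.mono_neutral_left) auto
  then have "lam * \<phi> u = real (deg E u) * \<phi> u - (\<Sum>w\<in>{w. E u w}. \<phi> w)"
    using eqs[OF comp_self[OF u]] by (simp add: lap_sub_def)
  also have "\<dots> = (\<Sum>w\<in>{w. E u w}. \<phi> u - \<phi> w)"
    by (simp add: sum_subtractf deg_def)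
  finally show ?thesis using lampos by blast
qed


lemma child:
  assumes "u \<in> V - {i}" "E u w" "w \<noteq> par u"
  shows "w \<in> V - {i} \<and> par w = u \<and> d w = d u + 1"
proof -
  have dw: "d w = d u + 1" using tree_struct assms by blast
  have wV: "w \<in> V" using inV assms by blast
  have wi: "w \<noteq> i" using dw d_i by auto
  have "par w = u"
  proof (rule ccontr)
    assume "par w \<noteq> u"
    then have "d u = d w + 1" using tree_struct[of w u] wV wi symE assms(2) by blast
    then show False using dw by simp
  qed
  then show ?thesis using dw wV wi by blast
qed

lemma mono_par: "v \<in> V - {i} \<Longrightarrow> \<phi> (par v) < \<phi> v"
proof -
  define M where "M = Max (d ` V)"
  have dM: "u \<in> V \<Longrightarrow> d u \<le> M" for u unfolding M_def using finV by simp
  have "\<forall>v. v \<in> V - {i} \<longrightarrow> M - d v = n \<longrightarrow> \<phi> (par v) < \<phi> v" for n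
  proof (induction n rule: less_induct)
    case (less n)
    show ?case
    proof (intro allI impI)
      fix v assume v: "v \<in> V - {i}" and n: "M - d v = n"
      obtain lam where lam: "lam > 0" "lam * \<phi> v = (\<Sum>w\<in>{w. E v w}. \<phi> v - \<phi> w)"
        using local_eq[OF v] by blast
      have finN: "finite {w. E v w}" using finV inV by (metis (no_types) finite_subset mem_Collect_eq subsetI)
      have pv: "par v \<in> {w. E v w}" using par v by blast
      have "(\<Sum>w\<in>{w. E v w}. \<phi> v - \<phi> w) = (\<phi> v - \<phi> (par v)) + (\<Sum>w\<in>{w. E v w} - {par v}. \<phi> v - \<phi> w)"
        using sum.remove[OF finN pv] by simp
      moreover have "(\<Sum>w\<in>{w. E v w} - {par v}. \<phi> v - \<phi> w) \<le> 0"
      proof (rule sum_nonpos)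
        fix w assume w: "w \<in> {w. E v w} - {par v}"
        then have c: "w \<in> V - {i}" "par w = v" "d w = d v + 1" using child[OF v] by auto
        have "M - d w < n" using n c dM[of w] by auto
        then have "\<phi> (par w) < \<phi> w" using less.IH c(1) by blast
        then show "\<phi> v - \<phi> w \<le> 0" using c by simp
      qed
      moreover have "lam * \<phi> v > 0" using lam(1) phi_pos[OF v] by simp
      ultimately show "\<phi> (par v) < \<phi> v" using lam by linarith
    qed
  qed
  then show "v \<in> V - {i} \<Longrightarrow> \<phi> (par v) < \<phi> v" for v by blast
qed

lemma descent:
  assumes jV: "j \<in> V" and run: "descent_run E i \<phi> j x"
  shows "\<exists>n. x n = i \<and> (\<forall>k<n. x k \<noteq> i) \<and> n = graph_dist E j i"
proof -
  let ?D = "d j"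
  have x0: "x 0 = j" and st: "\<And>k. x k \<noteq> i \<Longrightarrow> E (x k) (x (Suc k)) \<and> (\<forall>w. E (x k) w \<longrightarrow> \<phi> (x (Suc k)) \<le> \<phi> w)"
    using run by (auto simp: descent_run_def)
  have inv: "k \<le> ?D \<Longrightarrow> x k \<in> V \<and> d (x k) = ?D - k" for k
  proof (induction k)
    case 0 then show ?case using x0 jV by simp
  next
    case (Suc k)
    then have IH: "x k \<in> V" "d (x k) = ?D - k" by auto
    have ne: "x k \<noteq> i" using IH Suc.prems d_i by auto
    let ?u = "x k" and ?w = "x (Suc k)"
    have u: "?u \<in> V - {i}" using IH ne by blast
    have e: "E ?u ?w" and mn: "\<phi> ?w \<le> \<phi> (par ?u)" using st[OF ne] par[OF IH(1) ne] by auto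
    have wp: "?w = par ?u"
    proof (rule ccontr)
      assume "?w \<noteq> par ?u"
      then have c: "?w \<in> V - {i}" "par ?w = ?u" using child[OF u e] by auto
      have "\<phi> ?u < \<phi> ?w" using mono_par[OF c(1)] c(2) by simp
      moreover have "\<phi> (par ?u) < \<phi> ?u" using mono_par[OF u] .
      ultimately show False using mn by simp
    qed
    have "d (par ?u) + 1 = d ?u" using par[OF IH(1) ne] by blast
    then show ?case using wp IH Suc.prems par[OF IH(1) ne] inV by auto
  qed
  have "x ?D = i" using inv[of ?D] d_0 by auto
  moreover have "\<forall>k<?D. x k \<noteq> i" using inv d_i by fastforce
  ultimately show ?thesis by (auto simp: d_def)
qed

end

theorem theorem2:
  fixes V :: "'a set" and E :: "'a \<Rightarrow> 'a \<Rightarrow> bool" and i j :: 'a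
    and \<phi> :: "'a \<Rightarrow> real" and x :: "nat \<Rightarrow> 'a"
  assumes "is_tree V E" and "i \<in> V" and "is_phi V E i \<phi>"
    and "j \<in> V" and "descent_run E i \<phi> j x"
  shows "\<exists>n. x n = i \<and> (\<forall>k<n. x k \<noteq> i) \<and> n = graph_dist E j i"
proof -
  interpret setting V E i \<phi> using assms(1-3) by unfold_locales
  show ?thesis using descent assms(4,5) by blast
qed

end
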